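(* Assume $E$ is countable, let $\gamma$ be a POS and $\alpha$ a dust-rate matrix for $\gamma$. Let $y\in S$, $x\in S\setminus y_+$, and let $f$ be a bounded $\mathcal F_{S\setminus y_+}$-measurable function. Then $\delta_x(\gamma_y f)=0$ if $x=y$; $\delta_x(\gamma_y f)\le\delta_x(f)$ if $x\in\{y\}^*$; and $\delta_x(\gamma_y f)\le\delta_x(f)+\delta_y(f)\,\alpha_{y,x}$ if $x<y$.
   Context: $(S,\le)$ is a countable partially ordered set. For $x\in S$ write $x_-=\{y\in S:y<x\}$, $x_+=\{y\in S:y>x\}$. For $\Upsilon\subset S$: $\max(\Upsilon)=\{x\in\Upsilon: y\notin\Upsilon\text{ for all }y>x\}$, $\min(\Upsilon)=\{x\in\Upsilon: y\notin\Upsilon\text{ for all }y<x\}$, the past $\Upsilon_-=\{x\in S\setminus\Upsilon:\exists y\in\Upsilon,\ x<y\}$, the future $\Upsilon_+=\{x\in S\setminus\Upsilon:\exists y\in\Upsilon,\ x>y\}$, and the outer time $\Upsilon^*=\{x\in S: x\text{ is comparable with no }y\in\Upsilon\}$. Standing assumptions: for every $x\in S$, $\max(x_-)$ and $\min(x_+)$ are finite, every $y<x$ satisfies $y\le y_0<x$ for some $y_0\in\max(x_-)$, every $z>x$ satisfies $z\ge z_0>x$ for some $z_0\in\min(x_+)$; and $S$ has no minimal element. A finite set $\Lambda\subset S$ is a time box if $\Lambda_-\cap\Lambda_+=\emptyset$. $\Omega=E^S$ with product $\sigma$-algebra $\mathcal F$; $\mathcal F_\Upsilon$ is generated by coordinates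 in $\Upsilon$. A proper oriented kernel on a time box $\Lambda$ is a map $\gamma_\Lambda:\mathcal F_{S\setminus\Lambda_+}\times\Omega\to[0,1]$ such that (a) $\gamma_\Lambda(\cdot,\omega)$ is a probability measure; (b) $\gamma_\Lambda(A,\cdot)$ is $\mathcal F_{\Lambda_-\cup\Lambda^*}$-measurable for $A\in\mathcal F_{S\setminus\Lambda_+}$; (c) $\gamma_\Lambda(A,\cdot)$ is $\mathcal F_{\Lambda_-}$-measurable for $A\in\mathcal F_\Lambda$; (d) $\gamma_\Lambda(B,\omega)=\mathbf 1_B(\omega)$ for $B\in\mathcal F_{\Lambda_-\cup\Lambda^*}$. A POS is a family $\gamma=(\gamma_\Lambda)$ of proper oriented kernels indexed by all time boxes with $\gamma_\Delta\gamma_\Lambda=\gamma_\Delta$ on $\mathcal F_{S\setminus\Lambda_+}$ whenever $\Lambda\subset\Delta$ (composition $(\gamma_\Delta\gamma_\Lambda)(f\mid\omega)=\int\gamma_\Lambda(f\mid\sigma)\gamma_\Delta(d\sigma,\omega)$). We write $\gamma_y=\gamma_{\{y\}}$ and $\gamma_y f(\omega)=\int f\,d\gamma_y(\cdot,\omega)$. For $\xi,\eta\in\Omega$ and $x\in S$, $\xi\overset{x}{=}\eta$ means $\xi_z=\eta_z$ for all $z\ne x$; $\delta_x(f)=\sup_{\xi\overset{x}{=}\eta}|f(\xi)-f(\eta)|$. A dust-rate matrix is a family $(\alpha_{y,x})_{x\le y}$ of nonnegative reals with $\alpha_{y,y}=0$ and $\delta_x(\gamma_y f)\le\delta_y(f)\,\alpha_{y,x}$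 for all $y\in S$, $x\in y_-$ and all bounded $\mathcal F_{\{y\}}$-measurable $f$. *)

theory Defs
  imports "HOL-Probability.Probability"
begin

text \<open>The countable poset S is the type 's (class countable, order); the state space E is the
  countable type 'e (discrete sigma-algebra); configurations are \<open>'s \<Rightarrow> 'e\<close>.\<close>

definition max_set :: "'s::order set \<Rightarrow> 's set" where
  "max_set U = {x \<in> U. \<forall>y. x < y \<longrightarrow> y \<notin> U}"

definition min_set :: "'s::order set \<Rightarrow> 's set" where
  "min_set U = {x \<in> U. \<forall>y. y < x \<longrightarrow> y \<notin> U}"

definition past :: "'s::order set \<Rightarrow> 's set" where
  "past U = {x. x \<notin> U \<and> (\<exists>y\<in>U. x < y)}"

definition future :: "'s::order set \<Rightarrow> 's set" where
  "future U = {x. x \<notin> U \<and> (\<exists>y\<in>U. y < x)}"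

definition outer :: "'s::order set \<Rightarrow> 's set" where
  "outer U = {x. \<forall>y\<in>U. \<not> (x \<le> y) \<and> \<not> (y \<le> x)}"

definition standing_poset :: "'s::order itself \<Rightarrow> bool" where
  "standing_poset _ \<longleftrightarrow>
     (\<forall>x::'s. finite (max_set {y. y < x}) \<and> finite (min_set {z. x < z})) \<and>
     (\<forall>x y::'s. y < x \<longrightarrow> (\<exists>y0 \<in> max_set {y. y < x}. y \<le> y0)) \<and>
     (\<forall>x z::'s. x < z \<longrightarrow> (\<exists>z0 \<in> min_set {z. x < z}. z0 \<le> z)) \<and>
     (\<forall>x::'s. \<exists>y. y < x)"

definition time_box :: "'s::order set \<Rightarrow> bool" where
  "time_box L \<longleftrightarrow> finite L \<and> past L \<inter> future L = {}"

text \<open>\<open>FM U\<close>: the measurable space \<open>(\<Omega>, \<F>_U)\<close>, \<open>\<F>_U\<close> generated by the coordinates in U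
  (E carries its discrete sigma-algebra).\<close>
definition FM :: "'s set \<Rightarrow> ('s \<Rightarrow> 'e) measure" where
  "FM U = sigma UNIV {{\<omega>. \<omega> z \<in> A} | z A. z \<in> U}"

text \<open>A proper oriented kernel on L: \<open>K \<omega>\<close> is the measure \<open>\<gamma>_L(\<cdot>,\<omega>)\<close> on \<open>\<F>_{S\<setminus>L_+}\<close>.\<close>
definition proper_oriented_kernel :: "'s::order set \<Rightarrow> (('s \<Rightarrow> 'e) \<Rightarrow> ('s \<Rightarrow> 'e) measure) \<Rightarrow> bool" where
  "proper_oriented_kernel L K \<longleftrightarrow>
     (\<forall>\<omega>. prob_space (K \<omega>) \<and> sets (K \<omega>) = sets (FM (UNIV - future L))) \<and>
     (\<forall>A \<in> sets (FM (UNIV - future L)).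
        (\<lambda>\<omega>. measure (K \<omega>) A) \<in> borel_measurable (FM (past L \<union> outer L))) \<and>
     (\<forall>A \<in> sets (FM L). (\<lambda>\<omega>. measure (K \<omega>) A) \<in> borel_measurable (FM (past L))) \<and>
     (\<forall>B \<in> sets (FM (past L \<union> outer L)). \<forall>\<omega>. measure (K \<omega>) B = indicator B \<omega>)"

text \<open>POS: proper oriented kernels on every time box, with the consistency
  \<open>\<gamma>_\<Delta>\<gamma>_\<Lambda> = \<gamma>_\<Delta>\<close>.\<close>
definition POS :: "('s::order set \<Rightarrow> ('s \<Rightarrow> 'e) \<Rightarrow> ('s \<Rightarrow> 'e) measure) \<Rightarrow> bool" where
  "POS \<gamma> \<longleftrightarrow>
     (\<forall>L. time_box L \<longrightarrow> proper_oriented_kernel L (\<gamma> L)) \<and>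
     (\<forall>L D. time_box L \<longrightarrow> time_box D \<longrightarrow> L \<subseteq> D \<longrightarrow>
        (\<forall>A \<in> sets (FM (UNIV - future L)) \<inter> sets (FM (UNIV - future D)). \<forall>\<omega>.
           (\<integral>\<sigma>. measure (\<gamma> L (\<lambda>z. if z \<in> future D then \<omega> z else \<sigma> z)) A \<partial>(\<gamma> D \<omega>))
             = measure (\<gamma> D \<omega>) A))"

definition gamma_pt :: "('s::order set \<Rightarrow> ('s \<Rightarrow> 'e) \<Rightarrow> ('s \<Rightarrow> 'e) measure) \<Rightarrow> 's
     \<Rightarrow> (('s \<Rightarrow> 'e) \<Rightarrow> real) \<Rightarrow> ('s \<Rightarrow> 'e) \<Rightarrow> real" where
  "gamma_pt \<gamma> y f \<omega> = (\<integral>\<sigma>. f \<sigma> \<partial>(\<gamma> {y} \<omega>))"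

definition osc :: "'s \<Rightarrow> (('s \<Rightarrow> 'e) \<Rightarrow> real) \<Rightarrow> real" where
  "osc x f = Sup {\<bar>f \<xi> - f \<eta>\<bar> | \<xi> \<eta>. \<forall>z. z \<noteq> x \<longrightarrow> \<xi> z = \<eta> z}"

definition bounded_fun :: "('a \<Rightarrow> real) \<Rightarrow> bool" where
  "bounded_fun f \<longleftrightarrow> (\<exists>B. \<forall>a. \<bar>f a\<bar> \<le> B)"

definition dust_rate :: "('s::order set \<Rightarrow> ('s \<Rightarrow> 'e) \<Rightarrow> ('s \<Rightarrow> 'e) measure)
     \<Rightarrow> ('s \<Rightarrow> 's \<Rightarrow> real) \<Rightarrow> bool" where
  "dust_rate \<gamma> \<alpha> \<longleftrightarrow>
     (\<forall>x y. x \<le> y \<longrightarrow> 0 \<le> \<alpha> y x) \<and> (\<forall>y. \<alpha> y y = 0) \<and>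
     (\<forall>y x f. x < y \<longrightarrow> f \<in> borel_measurable (FM {y}) \<longrightarrow> bounded_fun f \<longrightarrow>
        osc x (gamma_pt \<gamma> y f) \<le> osc y f * \<alpha> y x)"

end

theory Submission
  imports Defs
begin

lemma space_FM[simp]: "space (FM U) = UNIV"
  unfolding FM_def by (simp add: space_measure_of_conv)

lemma sets_FM: "sets (FM U) = sigma_sets UNIV {{\<omega>. \<omega> z \<in> A} | z A. z \<in> U}"
  unfolding FM_def by (rule sets_measure_of) auto

lemma FM_saturated_set:
  assumes "A \<in> sets (FM U)"
  shows "\<forall>\<sigma> \<tau>. (\<forall>z\<in>U. \<sigma> z = \<tau> z) \<longrightarrow> (\<sigma> \<in> A \<longleftrightarrow> \<tau> \<in> A)"
  using assms unfolding sets_FM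
proof (induction rule: sigma_sets.induct)
  case (Basic a)
  then show ?case by auto
next
  case Empty
  then show ?case by auto
next
  case (Compl a)
  then show ?case by blast
next
  case (Union a)
  then show ?case by blast
qed

lemma FM_saturated_fun:
  fixes f :: "_ \<Rightarrow> real"
  assumes "f \<in> borel_measurable (FM U)" "\<forall>z\<in>U. \<sigma> z = \<tau> z"
  shows "f \<sigma> = f \<tau>"
proof -
  have "f -` {f \<tau>} \<inter> space (FM U) \<in> sets (FM U)"
    using assms(1) by (rule measurable_sets) auto
  then have "f -` {f \<tau>} \<in> sets (FM U)" by simp
  from FM_saturated_set[OF this] assms(2) show ?thesis by auto
qed

lemma coord_in_FM: "z \<in> U \<Longrightarrow> {\<omega>. \<omega> z \<in> A} \<in> sets (FM U)"
  unfolding sets_FM by (rule sigma_sets.Basic) auto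

lemma coord_meas:
  assumes "z \<in> U"
  shows "(\<lambda>\<sigma>. \<sigma> z) \<in> measurable (FM U) (count_space (UNIV::'e::countable set))"
proof -
  have "(\<lambda>\<sigma>. \<sigma> z) -` {a} \<inter> space (FM U) \<in> sets (FM U)" for a :: 'e
  proof -
    have "(\<lambda>\<sigma>. \<sigma> z) -` {a} \<inter> space (FM U) = {\<sigma>. \<sigma> z \<in> {a}}" by auto
    then show ?thesis using coord_in_FM[OF assms, of "{a}"] by simp
  qed
  then show ?thesis
    by (subst measurable_count_space_eq_countable) auto
qed

lemma osc_le:
  assumes "bounded_fun f" "\<forall>z. z \<noteq> x \<longrightarrow> \<xi> z = \<eta> z"
  shows "\<bar>f \<xi> - f \<eta>\<bar> \<le> osc x f"
proof -
  obtain B where B: "\<forall>a. \<bar>f a\<bar> \<le> B" using assms(1) unfolding bounded_fun_def by blast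
  have "bdd_above {\<bar>f \<xi> - f \<eta>\<bar> | \<xi> \<eta>. \<forall>z. z \<noteq> x \<longrightarrow> \<xi> z = \<eta> z}"
  proof (rule bdd_aboveI)
    fix r assume "r \<in> {\<bar>f \<xi> - f \<eta>\<bar> | \<xi> \<eta>. \<forall>z. z \<noteq> x \<longrightarrow> \<xi> z = \<eta> z}"
    then obtain a b where "r = \<bar>f a - f b\<bar>" by blast
    with B[rule_format, of a] B[rule_format, of b] show "r \<le> 2 * B" by linarith
  qed
  then show ?thesis unfolding osc_def using assms(2) by (intro cSup_upper) auto
qed

lemma osc_least:
  assumes "\<And>\<xi> \<eta>. \<forall>z. z \<noteq> x \<longrightarrow> \<xi> z = \<eta> z \<Longrightarrow> \<bar>f \<xi> - f \<eta>\<bar> \<le> c"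
  shows "osc x f \<le> c"
  unfolding osc_def using assms by (intro cSup_least) auto

lemma osc_nonneg:
  assumes "bounded_fun f" shows "0 \<le> osc x f"
  using osc_le[OF assms, of x \<xi> \<xi> for \<xi>] by (meson abs_ge_zero order_trans)

lemma int_diff_bound:
  fixes f g :: "_ \<Rightarrow> real"
  assumes "prob_space M" "integrable M f" "integrable M g" "\<And>e. \<bar>f e - g e\<bar> \<le> c"
  shows "\<bar>(\<integral>e. f e \<partial>M) - (\<integral>e. g e \<partial>M)\<bar> \<le> c"
proof -
  have "\<bar>(\<integral>e. f e \<partial>M) - (\<integral>e. g e \<partial>M)\<bar> = \<bar>\<integral>e. f e - g e \<partial>M\<bar>"
    using assms by simp
  also have "\<dots> \<le> (\<integral>e. \<bar>f e - g e\<bar> \<partial>M)"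
    using integral_abs_bound[of M "\<lambda>e. f e - g e"] by simp
  also have "\<dots> \<le> (\<integral>e. c \<partial>M)"
    using assms finite_measure.integrable_const[of M c] prob_space_def[of M] by (intro integral_mono) auto
  also have "\<dots> = c" using prob_space.prob_space[OF assms(1)] by simp
  finally show ?thesis .
qed



theorem mainTheorem20:
  fixes \<gamma> :: "'s::{order,countable} set \<Rightarrow> ('s \<Rightarrow> 'e::countable) \<Rightarrow> ('s \<Rightarrow> 'e) measure"
    and \<alpha> :: "'s \<Rightarrow> 's \<Rightarrow> real"
    and y x :: 's
    and f :: "('s \<Rightarrow> 'e) \<Rightarrow> real"
  assumes "standing_poset TYPE('s)"
    and "POS \<gamma>"
    and "dust_rate \<gamma> \<alpha>"
    and "x \<notin> future {y}"
    and "f \<in> borel_measurable (FM (UNIV - future {y}))"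
    and "bounded_fun f"
  shows "(x = y \<longrightarrow> osc x (gamma_pt \<gamma> y f) = 0)
       \<and> (x \<in> outer {y} \<longrightarrow> osc x (gamma_pt \<gamma> y f) \<le> osc x f)
       \<and> (x < y \<longrightarrow> osc x (gamma_pt \<gamma> y f) \<le> osc x f + osc y f * \<alpha> y x)"
proof -
  define V where "V = UNIV - future {y}"
  define Pa where "Pa = past {y}"
  define Ou where "Ou = outer {y}"
  define K where "K = \<gamma> {y}"
  have fut: "future {y} = {z. y < z}" unfolding future_def by auto
  have Pa_eq: "Pa = {z. z < y}" unfolding Pa_def past_def by auto
  have Ou_eq: "Ou = {z. \<not> z \<le> y \<and> \<not> y \<le> z}" unfolding Ou_def outer_def by auto
  have V_eq: "V = {y} \<union> Pa \<union> Ou" unfolding V_def fut Pa_eq Ou_eq by auto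
  have yV: "y \<in> V" unfolding V_eq by auto
  have tb: "time_box {y}" unfolding time_box_def past_def future_def by auto
  have pok: "proper_oriented_kernel {y} K"
    using assms(2) tb unfolding POS_def K_def by blast
  have ps: "\<And>\<omega>. prob_space (K \<omega>)" and setsK: "\<And>\<omega>. sets (K \<omega>) = sets (FM V)"
    using pok unfolding proper_oriented_kernel_def V_def by auto
  have spK: "\<And>\<omega>. space (K \<omega>) = UNIV"
    using sets_eq_imp_space_eq[OF setsK] by simp
  have measPa: "\<And>A. A \<in> sets (FM {y}) \<Longrightarrow> (\<lambda>\<omega>. measure (K \<omega>) A) \<in> borel_measurable (FM Pa)"
    using pok unfolding proper_oriented_kernel_def Pa_def by auto
  have ind: "\<And>B \<omega>. B \<in> sets (FM (Pa \<union> Ou)) \<Longrightarrow> measure (K \<omega>) B = indicator B \<omega>"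
    using pok unfolding proper_oriented_kernel_def Pa_def Ou_def by auto
  have cm: "\<And>\<omega>. (\<lambda>\<sigma>. \<sigma> y) \<in> measurable (K \<omega>) (count_space (UNIV::'e set))"
    using coord_meas[OF yV] measurable_cong_sets[OF setsK refl] by blast
  define P where "P \<omega> = distr (K \<omega>) (count_space (UNIV::'e set)) (\<lambda>\<sigma>. \<sigma> y)" for \<omega>
  have psP: "\<And>\<omega>. prob_space (P \<omega>)"
    unfolding P_def using prob_space.prob_space_distr[OF ps cm] by blast
  have setsP: "\<And>\<omega>. sets (P \<omega>) = sets (count_space UNIV)" unfolding P_def by simp
  have intP: "integrable (P \<omega>) G" if "\<And>e. \<bar>G e\<bar> \<le> B" for \<omega> and G :: "'e \<Rightarrow> real" and B :: real
  proof (rule finite_measure.integrable_const_bound[where B=B])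
    show "finite_measure (P \<omega>)" using psP prob_space_def by blast
    show "AE x in P \<omega>. norm (G x) \<le> B" using that by simp
    show "G \<in> borel_measurable (P \<omega>)"
      unfolding measurable_cong_sets[OF setsP[of \<omega>] refl, of borel] by simp
  qed
  have key: "gamma_pt \<gamma> y F \<omega> = (\<integral>e. F ((fun_upd \<omega> y (e))) \<partial>P \<omega>)"
    if F: "F \<in> borel_measurable (FM V)" for F \<omega>
  proof -
    have "AE \<sigma> in K \<omega>. \<forall>z\<in>Pa \<union> Ou. \<sigma> z = \<omega> z"
    proof (subst AE_ball_countable)
      show "countable (Pa \<union> Ou)" by simp
      show "\<forall>z\<in>Pa \<union> Ou. AE \<sigma> in K \<omega>. \<sigma> z = \<omega> z"
      proof
        fix z assume z: "z \<in> Pa \<union> Ou"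
        have B: "{\<sigma>. \<sigma> z \<in> {\<omega> z}} \<in> sets (FM (Pa \<union> Ou))" using coord_in_FM[OF z] .
        have "measure (K \<omega>) {\<sigma>. \<sigma> z \<in> {\<omega> z}} = 1" using ind[OF B] by simp
        from prob_space.AE_prob_1[OF ps this] show "AE \<sigma> in K \<omega>. \<sigma> z = \<omega> z" by simp
      qed
    qed
    then have ae: "AE \<sigma> in K \<omega>. F \<sigma> = F ((fun_upd \<omega> y (\<sigma> y)))"
    proof (rule AE_mp, intro AE_I2 impI)
      fix \<sigma> assume "\<forall>z\<in>Pa \<union> Ou. \<sigma> z = \<omega> z"
      then have "\<forall>z\<in>V. \<sigma> z = ((fun_upd \<omega> y (\<sigma> y))) z" unfolding V_eq by auto
      from FM_saturated_fun[OF F this] show "F \<sigma> = F ((fun_upd \<omega> y (\<sigma> y)))" .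
    qed
    have FK: "F \<in> borel_measurable (K \<omega>)" using F measurable_cong_sets[OF setsK refl] by blast
    have GK: "(\<lambda>\<sigma>. F ((fun_upd \<omega> y (\<sigma> y)))) \<in> borel_measurable (K \<omega>)"
      using measurable_compose[OF cm, of "\<lambda>e. F ((fun_upd \<omega> y (e)))" borel] by auto
    have "gamma_pt \<gamma> y F \<omega> = (\<integral>\<sigma>. F ((fun_upd \<omega> y (\<sigma> y))) \<partial>K \<omega>)"
      unfolding gamma_pt_def K_def[symmetric] by (rule integral_cong_AE[OF FK GK ae])
    also have "\<dots> = (\<integral>e. F ((fun_upd \<omega> y (e))) \<partial>P \<omega>)"
      unfolding P_def by (rule integral_distr[symmetric, OF cm]) auto
    finally show ?thesis .
  qed
  have Peq: "P \<xi> = P \<eta>" if ag: "\<forall>z\<in>Pa. \<xi> z = \<eta> z" for \<xi> \<eta>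
  proof (rule measure_eqI)
    show "sets (P \<xi>) = sets (P \<eta>)" using setsP by simp
    fix A assume "A \<in> sets (P \<xi>)"
    have S: "{\<sigma>. \<sigma> y \<in> A} \<in> sets (FM {y})" by (rule coord_in_FM) simp
    have pre: "(\<lambda>\<sigma>. \<sigma> y) -` A \<inter> space (K \<omega>) = {\<sigma>. \<sigma> y \<in> A}" for \<omega> using spK by auto
    have "measure (K \<xi>) {\<sigma>. \<sigma> y \<in> A} = measure (K \<eta>) {\<sigma>. \<sigma> y \<in> A}"
      using FM_saturated_fun[OF measPa[OF S] ag] .
    moreover have "emeasure (P \<omega>) A = ennreal (measure (K \<omega>) {\<sigma>. \<sigma> y \<in> A})" for \<omega>
    proof -
      have fin: "finite_measure (K \<omega>)" using ps prob_space_def by blast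
      have "emeasure (P \<omega>) A = emeasure (K \<omega>) {\<sigma>. \<sigma> y \<in> A}"
        unfolding P_def by (subst emeasure_distr[OF cm]) (auto simp: pre)
      then show ?thesis using finite_measure.emeasure_eq_measure[OF fin] by simp
    qed
    ultimately show "emeasure (P \<xi>) A = emeasure (P \<eta>) A" by simp
  qed
  obtain Bf where Bf: "\<And>a. \<bar>f a\<bar> \<le> Bf" using assms(6) unfolding bounded_fun_def by blast
  have fV: "f \<in> borel_measurable (FM V)" using assms(5) V_def by simp
  have intg: "integrable (P \<omega>) (\<lambda>e. f ((fun_upd \<xi> y (e))))" for \<omega> \<xi>
    using intP[of "\<lambda>e. f ((fun_upd \<xi> y (e)))" Bf] Bf by blast
  have bndg: "bounded_fun (gamma_pt \<gamma> y F)"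
    if F: "F \<in> borel_measurable (FM V)" and B: "\<And>a. \<bar>F a\<bar> \<le> B" for F and B :: real
  proof -
    have "\<bar>gamma_pt \<gamma> y F \<omega>\<bar> \<le> B" for \<omega>
    proof -
      have "\<bar>(\<integral>e. F ((fun_upd \<omega> y (e))) \<partial>P \<omega>) - (\<integral>e. 0 \<partial>P \<omega>)\<bar> \<le> B"
        by (rule int_diff_bound[OF psP intP]) (use B in auto)
      then show ?thesis using key[OF F] by simp
    qed
    then show ?thesis unfolding bounded_fun_def by blast
  qed
  have P1: "osc x (gamma_pt \<gamma> y f) = 0" if "x = y"
  proof -
    have "{\<bar>gamma_pt \<gamma> y f \<xi> - gamma_pt \<gamma> y f \<eta>\<bar> | \<xi> \<eta>. \<forall>z. z \<noteq> x \<longrightarrow> \<xi> z = \<eta> z} = {0}"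
    proof (intro equalityI subsetI)
      fix r assume "r \<in> {\<bar>gamma_pt \<gamma> y f \<xi> - gamma_pt \<gamma> y f \<eta>\<bar> | \<xi> \<eta>. \<forall>z. z \<noteq> x \<longrightarrow> \<xi> z = \<eta> z}"
      then obtain \<xi> \<eta> where r: "r = \<bar>gamma_pt \<gamma> y f \<xi> - gamma_pt \<gamma> y f \<eta>\<bar>"
        and ag: "\<forall>z. z \<noteq> x \<longrightarrow> \<xi> z = \<eta> z" by blast
      have "P \<xi> = P \<eta>" using ag that Pa_eq by (intro Peq) auto
      moreover have "\<And>e. (fun_upd \<xi> y (e)) = (fun_upd \<eta> y (e))" using ag that by auto
      ultimately show "r \<in> {0}" using r key[OF fV] by simp
    qed auto
    then show ?thesis unfolding osc_def by simp
  qed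
  have P2: "osc x (gamma_pt \<gamma> y f) \<le> osc x f" if xo: "x \<in> outer {y}"
  proof (rule osc_least)
    fix \<xi> \<eta> :: "'s \<Rightarrow> 'e" assume ag: "\<forall>z. z \<noteq> x \<longrightarrow> \<xi> z = \<eta> z"
    have xO: "x \<in> Ou" using xo unfolding Ou_def .
    have xy: "x \<noteq> y" "x \<notin> Pa" using xO unfolding Ou_eq Pa_eq by auto
    have "\<forall>z\<in>Pa. \<xi> z = \<eta> z" using ag xy(2) by metis
    then have PP: "P \<xi> = P \<eta>" by (rule Peq)
    have I: "\<bar>f (fun_upd \<xi> y e) - f (fun_upd \<eta> y e)\<bar> \<le> osc x f" for e
      by (rule osc_le[OF assms(6)]) (simp add: ag)
    have "\<bar>(\<integral>e. f ((fun_upd \<xi> y (e))) \<partial>P \<xi>) - (\<integral>e. f ((fun_upd \<eta> y (e))) \<partial>P \<xi>)\<bar> \<le> osc x f"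
      by (rule int_diff_bound[OF psP intg intg I])
    then show "\<bar>gamma_pt \<gamma> y f \<xi> - gamma_pt \<gamma> y f \<eta>\<bar> \<le> osc x f"
      using key[OF fV] PP by simp
  qed
  have P3: "osc x (gamma_pt \<gamma> y f) \<le> osc x f + osc y f * \<alpha> y x" if xy: "x < y"
  proof (rule osc_least)
    fix \<xi> \<eta> :: "'s \<Rightarrow> 'e" assume ag: "\<forall>z. z \<noteq> x \<longrightarrow> \<xi> z = \<eta> z"
    define h where "h \<sigma> = f ((fun_upd \<eta> y (\<sigma> y)))" for \<sigma>
    have hB: "\<And>a. \<bar>h a\<bar> \<le> Bf" unfolding h_def using Bf by auto
    have hb: "bounded_fun h" using hB unfolding bounded_fun_def by blast
    have hm: "h \<in> borel_measurable (FM U)" if "y \<in> U" for U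
      unfolding h_def by (rule measurable_compose[OF coord_meas[OF that]]) simp
    have hV: "h \<in> borel_measurable (FM V)" using hm yV by blast
    have gh: "gamma_pt \<gamma> y h \<omega> = (\<integral>e. f ((fun_upd \<eta> y (e))) \<partial>P \<omega>)" for \<omega>
      using key[OF hV] unfolding h_def by simp
    have t1: "\<bar>(\<integral>e. f ((fun_upd \<xi> y (e))) \<partial>P \<xi>) - (\<integral>e. f ((fun_upd \<eta> y (e))) \<partial>P \<xi>)\<bar> \<le> osc x f"
      by (rule int_diff_bound[OF psP intg intg]) (rule osc_le[OF assms(6)], simp add: ag)
    have "\<bar>gamma_pt \<gamma> y h \<xi> - gamma_pt \<gamma> y h \<eta>\<bar> \<le> osc x (gamma_pt \<gamma> y h)"
      by (rule osc_le[OF bndg[OF hV hB] ag])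
    also have "\<dots> \<le> osc y h * \<alpha> y x"
    proof -
      have D: "\<forall>y x f. x < y \<longrightarrow> f \<in> borel_measurable (FM {y}) \<longrightarrow> bounded_fun f \<longrightarrow>
        osc x (gamma_pt \<gamma> y f) \<le> osc y f * \<alpha> y x"
        using assms(3) unfolding dust_rate_def by blast
      have "h \<in> borel_measurable (FM {y})" using hm by simp
      then show ?thesis using D xy hb by blast
    qed
    also have "\<dots> \<le> osc y f * \<alpha> y x"
    proof (rule mult_right_mono)
      have "\<forall>x y. x \<le> y \<longrightarrow> 0 \<le> \<alpha> y x" using assms(3) unfolding dust_rate_def by blast
      then show "0 \<le> \<alpha> y x" using less_imp_le[OF xy] by blast
      show "osc y h \<le> osc y f"
      proof (rule osc_least)
        fix a b :: "'s \<Rightarrow> 'e" assume "\<forall>z. z \<noteq> y \<longrightarrow> a z = b z"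
        show "\<bar>h a - h b\<bar> \<le> osc y f" unfolding h_def
          by (rule osc_le[OF assms(6)]) simp
      qed
    qed
    finally have t2: "\<bar>(\<integral>e. f ((fun_upd \<eta> y (e))) \<partial>P \<xi>) - (\<integral>e. f ((fun_upd \<eta> y (e))) \<partial>P \<eta>)\<bar> \<le> osc y f * \<alpha> y x"
      using gh by simp
    show "\<bar>gamma_pt \<gamma> y f \<xi> - gamma_pt \<gamma> y f \<eta>\<bar> \<le> osc x f + osc y f * \<alpha> y x"
      using t1 t2 key[OF fV, of \<xi>] key[OF fV, of \<eta>] by linarith
  qed
  show ?thesis using P1 P2 P3 by blast
qed

end
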